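(* Let $n,d \in \mathbb{Z}^+$. Let $A$ be a C-recursive integer sequence of order $d$ with initial conditions $A(0)=A(1)=\cdots=A(d-1)=1$, satisfying $$A(n) = c_{d-1} A(n-1) + c_{d-2} A(n-2) + \cdots + c_{0} A(n-d),$$ where $c_0,\dots,c_{d-1}\in\mathbb{Z}$. Let $g(x) := c_{d-1}x^{d-1}+\cdots+c_1x+c_0 \in \mathbb{Z}[x]$, let $R=\mathbb{Z}[x]/I$ with $I=\langle x^d-g(x)\rangle$, and let $f(x)$ be the image of $x^n$ in $R$. Then $A(n)=f(1)$.
   Context: The image of $x^n$ in $R$ is identified with its unique representative in $\mathbb{Z}[x]$ of degree less than $d$ (the remainder of $x^n$ upon division by the monic polynomial $x^d-g(x)$); $f(1)$ denotes the evaluation of this representative at $x=1$. *)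

theory Defs
  imports "HOL-Computational_Algebra.Polynomial"
begin

definition gpoly :: "(nat \<Rightarrow> int) \<Rightarrow> nat \<Rightarrow> int poly" where
  "gpoly c d = (\<Sum>i<d. monom (c i) i)"

text \<open>The unique representative of degree < d of the image of x^n in Z[x]/(x^d - g(x)).\<close>
definition red_rep :: "(nat \<Rightarrow> int) \<Rightarrow> nat \<Rightarrow> nat \<Rightarrow> int poly" where
  "red_rep c d n = (THE r. degree r < d \<and> (monom 1 d - gpoly c d) dvd (monom 1 n - r))"

end

theory Submission
  imports Defs
begin

lemma gpoly_deg: "d \<ge> 1 \<Longrightarrow> degree (gpoly c d) < d"
  unfolding gpoly_def
  by (rule degree_sum_less) (auto intro: le_less_trans[OF degree_monom_le])

lemma p_deg: "d \<ge> 1 \<Longrightarrow> degree (monom 1 d - gpoly c d :: int poly) = d"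
proof -
  assume d: "d \<ge> 1"
  have "degree (monom 1 d + - gpoly c d :: int poly) = degree (monom (1::int) d)"
    by (rule degree_add_eq_left) (simp add: degree_monom_eq gpoly_deg[OF d])
  thus ?thesis by (simp add: degree_monom_eq)
qed

lemma red_rep_eq:
  assumes d: "d \<ge> 1" and r: "degree r < d" and dv: "(monom 1 d - gpoly c d) dvd (monom 1 n - r)"
  shows "red_rep c d n = r"
  unfolding red_rep_def
proof (rule the_equality)
  show "degree r < d \<and> (monom 1 d - gpoly c d) dvd (monom 1 n - r)" using r dv by simp
next
  fix r' :: "int poly" assume h: "degree r' < d \<and> (monom 1 d - gpoly c d) dvd (monom 1 n - r')"
  have "(monom 1 d - gpoly c d) dvd ((monom 1 n - r) - (monom 1 n - r'))"
    using dvd_diff[OF dv conjunct2[OF h]] .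
  hence dv2: "(monom 1 d - gpoly c d) dvd (r' - r)" by simp
  show "r' = r"
  proof (rule ccontr)
    assume "r' \<noteq> r"
    hence "r' - r \<noteq> 0" by simp
    from dvd_imp_degree_le[OF dv2 this] p_deg[OF d]
    have "d \<le> degree (r' - r)" by simp
    moreover have "degree (r' - r) < d"
      using h r degree_diff_le_max[of r' r] by linarith
    ultimately show False by simp
  qed
qed

theorem lemma3p1:
  fixes A c :: "nat \<Rightarrow> int" and n d :: nat
  assumes "n \<ge> 1" and "d \<ge> 1"
    and "\<And>k. k < d \<Longrightarrow> A k = 1"
    and "\<And>m. m \<ge> d \<Longrightarrow> A m = (\<Sum>i<d. c i * A (m - d + i))"
  shows "A n = poly (red_rep c d n) 1"
proof -
  let ?p = "monom 1 d - gpoly c d :: int poly"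
  let ?R = "red_rep c d"
  have "degree (?R m) < d \<and> ?p dvd (monom 1 m - ?R m) \<and> poly (?R m) 1 = A m" for m
  proof (induction m rule: less_induct)
    case (less m)
    show ?case
    proof (cases "m < d")
      case True
      have "?R m = monom 1 m"
        by (rule red_rep_eq) (use assms(2) True in \<open>auto simp: degree_monom_eq\<close>)
      thus ?thesis using True assms(3) by (simp add: degree_monom_eq poly_monom)
    next
      case False
      define r where "r = (\<Sum>i<d. smult (c i) (?R (m - d + i)))"
      have IH: "degree (?R (m - d + i)) < d \<and> ?p dvd (monom 1 (m - d + i) - ?R (m - d + i))
               \<and> poly (?R (m - d + i)) 1 = A (m - d + i)" if "i < d" for i
        using less.IH[of "m - d + i"] that False by auto
      have rdeg: "degree r < d" unfolding r_def
        using assms(2) IH by (intro degree_sum_less) (auto intro: le_less_trans[OF degree_smult_le])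
      have "(monom 1 m :: int poly) = monom 1 (m - d) * monom 1 d"
        using False by (simp add: mult_monom)
      also have "monom 1 d = ?p + gpoly c d" by simp
      finally have e1: "monom 1 m = monom 1 (m - d) * ?p + monom 1 (m - d) * gpoly c d"
        by (simp add: algebra_simps)
      have e2: "monom 1 (m - d) * gpoly c d = (\<Sum>i<d. smult (c i) (monom 1 (m - d + i)))"
        unfolding gpoly_def by (simp add: sum_distrib_left mult_monom smult_monom)
      have "monom 1 m - r = monom 1 (m - d) * ?p
             + (\<Sum>i<d. smult (c i) (monom 1 (m - d + i) - ?R (m - d + i)))"
        unfolding e1 e2 r_def by (simp add: sum_subtractf smult_diff_right)
      moreover have "?p dvd (\<Sum>i<d. smult (c i) (monom 1 (m - d + i) - ?R (m - d + i)))"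
        using IH by (intro dvd_sum) (simp add: dvd_smult)
      ultimately have rdv: "?p dvd (monom 1 m - r)" by simp
      have "?R m = r" by (rule red_rep_eq[OF assms(2) rdeg rdv])
      moreover have "poly r 1 = A m"
        unfolding r_def using IH assms(4)[of m] False by (simp add: poly_sum)
      ultimately show ?thesis using rdeg rdv by simp
    qed
  qed
  thus ?thesis by simp
qed

end
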